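(* Let $T$ be a strongly dependent complete theory. Let $I=(a_i:i\in[0,1])$ be an indiscernible segment, and let $\phi(x,y)$ be a formula with parameters from $\bar M$ such that $\mu_I(\phi(x,b))=0$ for all $b\in\bar M$. Then there is $k<\omega$ such that $\{\phi(a_i,y):i\in[0,1]\}$ is $k$-inconsistent (every subset of size $k$ is inconsistent).
   Context: Work in a monster model $\bar M$ of $T$. $T$ is strongly dependent if there do NOT exist $L$-formulas $\phi^\alpha(x,y^\alpha)$ ($\alpha<\omega$) and tuples $b^\alpha_i$ ($\alpha,i<\omega$) such that for every $\eta\in\omega^\omega$ the set $\{\phi^\alpha(x,b^\alpha_{\eta(\alpha)}):\alpha<\omega\}\cup\{\neg\phi^\alpha(x,b^\alpha_i):\alpha,i<\omega,\ i\neq\eta(\alpha)\}$ is consistent (this implies NIP). An indiscernible segment is a family $I=(a_i:i\in[0,1])$ indiscernible with respect to the usual order on $[0,1]$. Its global average measure $\mu_I$ is the Keisler measure over $\bar M$ assigning to a formula $\psi(x)$ over $\bar M$ the Lebesgue measure of $\{i\in[0,1]:\models\psi(a_i)\}$. *)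

theory Defs
  imports "HOL-Analysis.Analysis"
begin

text \<open>Symbols carry no fixed arity (equivalently: the
language has one symbol for each pair (symbol, arity)).\<close>

datatype 'f trm = Var nat | Fn 'f "'f trm list"

datatype ('f, 'r) fm =
    FEq "'f trm" "'f trm"
  | FRel 'r "'f trm list"
  | FNeg "('f, 'r) fm"
  | FConj "('f, 'r) fm" "('f, 'r) fm"
  | FEx nat "('f, 'r) fm"

record ('a, 'f, 'r) struct =
  carr :: "'a set"
  fint :: "'f \<Rightarrow> 'a list \<Rightarrow> 'a"
  rint :: "'r \<Rightarrow> 'a list \<Rightarrow> bool"

definition wf_struct :: "('a, 'f, 'r) struct \<Rightarrow> bool" where
  "wf_struct M \<longleftrightarrow> carr M \<noteq> {} \<and>
     (\<forall>f as. set as \<subseteq> carr M \<longrightarrow> fint M f as \<in> carr M)"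

fun fv_trm :: "'f trm \<Rightarrow> nat set" where
  "fv_trm (Var i) = {i}"
| "fv_trm (Fn f ts) = (\<Union>t\<in>set ts. fv_trm t)"

fun fv :: "('f, 'r) fm \<Rightarrow> nat set" where
  "fv (FEq s t) = fv_trm s \<union> fv_trm t"
| "fv (FRel r ts) = (\<Union>t\<in>set ts. fv_trm t)"
| "fv (FNeg p) = fv p"
| "fv (FConj p q) = fv p \<union> fv q"
| "fv (FEx i p) = fv p - {i}"

fun eval :: "('a, 'f, 'r) struct \<Rightarrow> (nat \<Rightarrow> 'a) \<Rightarrow> 'f trm \<Rightarrow> 'a" where
  "eval M s (Var i) = s i"
| "eval M s (Fn f ts) = fint M f (map (eval M s) ts)"

fun holds :: "('a, 'f, 'r) struct \<Rightarrow> (nat \<Rightarrow> 'a) \<Rightarrow> ('f, 'r) fm \<Rightarrow> bool" where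
  "holds M s (FEq t u) = (eval M s t = eval M s u)"
| "holds M s (FRel r ts) = rint M r (map (eval M s) ts)"
| "holds M s (FNeg p) = (\<not> holds M s p)"
| "holds M s (FConj p q) = (holds M s p \<and> holds M s q)"
| "holds M s (FEx i p) = (\<exists>a\<in>carr M. holds M (s(i := a)) p)"

text \<open>Assignment given by a tuple: variable j gets the j-th entry (unused variables
get an arbitrary element of the universe).  "sat M phi l" means that
phi(l_0, ..., l_{k-1}) holds in M.\<close>

definition asg :: "('a, 'f, 'r) struct \<Rightarrow> 'a list \<Rightarrow> nat \<Rightarrow> 'a" where
  "asg M l = (\<lambda>j. if j < length l then l ! j else (SOME a. a \<in> carr M))"

definition sat :: "('a, 'f, 'r) struct \<Rightarrow> ('f, 'r) fm \<Rightarrow> 'a list \<Rightarrow> bool" where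
  "sat M phi l \<longleftrightarrow> holds M (asg M l) phi"

definition tuple_in :: "('a, 'f, 'r) struct \<Rightarrow> nat \<Rightarrow> 'a list \<Rightarrow> bool" where
  "tuple_in M n l \<longleftrightarrow> length l = n \<and> set l \<subseteq> carr M"

text \<open>A partial type in an n-tuple of variables x with parameters is a set of pairs
(psi, c): psi has x as its variables 0..<n and the parameter places n..<n+|c|,
which are filled by the tuple c of elements of M.  Consistency (with the
elementary diagram of M) = finite satisfiability in M.\<close>

definition fin_sat :: "('a, 'f, 'r) struct \<Rightarrow> nat \<Rightarrow> (('f, 'r) fm \<times> 'a list) set \<Rightarrow> bool" where
  "fin_sat M n p \<longleftrightarrow> (\<forall>F. finite F \<and> F \<subseteq> p \<longrightarrow>
      (\<exists>a. tuple_in M n a \<and> (\<forall>(psi, c)\<in>F. sat M psi (a @ c))))"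

definition realized :: "('a, 'f, 'r) struct \<Rightarrow> nat \<Rightarrow> (('f, 'r) fm \<times> 'a list) set \<Rightarrow> bool" where
  "realized M n p \<longleftrightarrow> (\<exists>a. tuple_in M n a \<and> (\<forall>(psi, c)\<in>p. sat M psi (a @ c)))"

text \<open>|A| < |B| expressed as: there is no injection of B into A.\<close>
definition smaller :: "'b set \<Rightarrow> 'a set \<Rightarrow> bool" where
  "smaller A B \<longleftrightarrow> \<not> (\<exists>f. inj_on f B \<and> f ` B \<subseteq> A)"

definition saturated :: "('a, 'f, 'r) struct \<Rightarrow> bool" where
  "saturated M \<longleftrightarrow> (\<forall>n p. smaller (\<Union>(psi, c)\<in>p. set c) (carr M)
        \<and> (\<forall>(psi, c)\<in>p. set c \<subseteq> carr M) \<and> fin_sat M n p \<longrightarrow> realized M n p)"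

definition monster :: "('a, 'f, 'r) struct \<Rightarrow> bool" where
  "monster M \<longleftrightarrow> wf_struct M \<and> saturated M \<and>
     smaller (UNIV :: real set) (carr M) \<and> smaller (UNIV :: ('f, 'r) fm set) (carr M)"

text \<open>phi alpha (x, y^alpha) with |x| = n, |y^alpha| = m alpha, x = variables 0..<n,
y^alpha = variables n..<n + m alpha, no parameters.\<close>
definition strongly_dependent :: "('a, 'f, 'r) struct \<Rightarrow> bool" where
  "strongly_dependent M \<longleftrightarrow> \<not> (\<exists>(n::nat) (phi :: nat \<Rightarrow> ('f, 'r) fm) (m :: nat \<Rightarrow> nat)
       (b :: nat \<Rightarrow> nat \<Rightarrow> 'a list).
     (\<forall>\<alpha>. fv (phi \<alpha>) \<subseteq> {..<n + m \<alpha>}) \<and>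
     (\<forall>\<alpha> i. tuple_in M (m \<alpha>) (b \<alpha> i)) \<and>
     (\<forall>\<eta> :: nat \<Rightarrow> nat. fin_sat M n
        ({(phi \<alpha>, b \<alpha> (\<eta> \<alpha>)) | \<alpha>. True} \<union>
         {(FNeg (phi \<alpha>), b \<alpha> i) | \<alpha> i. i \<noteq> \<eta> \<alpha>})))"

definition indisc_segment :: "('a, 'f, 'r) struct \<Rightarrow> nat \<Rightarrow> (real \<Rightarrow> 'a list) \<Rightarrow> bool" where
  "indisc_segment M n I \<longleftrightarrow>
     (\<forall>i\<in>{0..1}. tuple_in M n (I i)) \<and>
     (\<forall>(psi :: ('f, 'r) fm) is js. fv psi \<subseteq> {..<length is * n} \<and>
        length is = length js \<and>
        sorted_wrt (<) is \<and> sorted_wrt (<) js \<and>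
        set is \<subseteq> {0..1} \<and> set js \<subseteq> {0..1} \<longrightarrow>
        (sat M psi (concat (map I is)) \<longleftrightarrow> sat M psi (concat (map I js))))"

definition avg_measure :: "('a, 'f, 'r) struct \<Rightarrow> (real \<Rightarrow> 'a list) \<Rightarrow> ('f, 'r) fm \<Rightarrow> 'a list \<Rightarrow> real" where
  "avg_measure M I psi c = measure lebesgue {i \<in> {0..1}. sat M psi (I i @ c)}"

end

theory Submission
  imports Defs
begin


fun ren_t :: "(nat \<Rightarrow> nat) \<Rightarrow> 'f trm \<Rightarrow> 'f trm" where
  "ren_t \<sigma> (Var i) = Var (\<sigma> i)"
| "ren_t \<sigma> (Fn f ts) = Fn f (map (ren_t \<sigma>) ts)"

fun renf :: "(nat \<Rightarrow> nat) \<Rightarrow> ('f,'r) fm \<Rightarrow> ('f,'r) fm" where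
  "renf \<sigma> (FEq s t) = FEq (ren_t \<sigma> s) (ren_t \<sigma> t)"
| "renf \<sigma> (FRel r ts) = FRel r (map (ren_t \<sigma>) ts)"
| "renf \<sigma> (FNeg p) = FNeg (renf \<sigma> p)"
| "renf \<sigma> (FConj p q) = FConj (renf \<sigma> p) (renf \<sigma> q)"
| "renf \<sigma> (FEx i p) = FEx (\<sigma> i) (renf \<sigma> p)"

lemma eval_ren: "eval M s (ren_t \<sigma> t) = eval M (s \<circ> \<sigma>) t"
  by (induction t) (auto cong: map_cong)

lemma fv_trm_ren: "fv_trm (ren_t \<sigma> t) = \<sigma> ` fv_trm t"
  by (induction t) auto

lemma holds_ren: "inj \<sigma> \<Longrightarrow> holds M s (renf \<sigma> p) = holds M (s \<circ> \<sigma>) p"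
proof (induction p arbitrary: s)
  case (FEx i p)
  have "\<And>a. (s(\<sigma> i := a)) \<circ> \<sigma> = (s \<circ> \<sigma>)(i := a)"
    using FEx.prems by (auto simp: fun_eq_iff inj_eq)
  then show ?case by (simp only: renf.simps holds.simps FEx.IH[OF FEx.prems])
qed (auto simp: eval_ren o_def)

lemma fv_ren: "fv (renf \<sigma> p) \<subseteq> \<sigma> ` fv p"
  by (induction p) (auto simp: fv_trm_ren)

lemma eval_coinc: "(\<forall>v\<in>fv_trm t. s v = s' v) \<Longrightarrow> eval M s t = eval M s' t"
  by (induction t) (auto cong: map_cong)

lemma holds_coinc: "(\<forall>v\<in>fv p. s v = s' v) \<Longrightarrow> holds M s p = holds M s' p"
proof (induction p arbitrary: s s')
  case (FEq t u) then show ?case using eval_coinc[of t s s' M] eval_coinc[of u s s' M] by auto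
next
  case (FRel r ts)
  have "map (eval M s) ts = map (eval M s') ts"
    using FRel eval_coinc[of _ s s' M] by (auto intro!: map_cong)
  then show ?case by (simp only: holds.simps)
next
  case (FEx i p)
  have "\<And>a. holds M (s(i := a)) p = holds M (s'(i := a)) p"
    using FEx.IH FEx.prems by auto
  then show ?case by simp
next
  case (FNeg p) then show ?case by simp
next
  case (FConj p q)
  then show ?case by (metis UnI1 UnI2 fv.simps(4) holds.simps(4))
qed

definition TT :: "('f,'r) fm" where "TT = FNeg (FEx 0 (FNeg (FEq (Var 0) (Var 0))))"

lemma holds_TT[simp]: "holds M s TT" by (simp add: TT_def)
lemma fv_TT[simp]: "fv TT = {}" by (simp add: TT_def)

fun conjs :: "('f,'r) fm list \<Rightarrow> ('f,'r) fm" where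
  "conjs [] = TT"
| "conjs (p # ps) = FConj p (conjs ps)"

lemma holds_conjs: "holds M s (conjs ps) = (\<forall>p\<in>set ps. holds M s p)"
  by (induction ps) auto

lemma fv_conjs: "fv (conjs ps) = (\<Union>p\<in>set ps. fv p)"
  by (induction ps) auto

fun exs :: "nat list \<Rightarrow> ('f,'r) fm \<Rightarrow> ('f,'r) fm" where
  "exs [] p = p"
| "exs (v # vs) p = FEx v (exs vs p)"

lemma fv_exs: "fv (exs vs p) = fv p - set vs"
  by (induction vs) auto

lemma holds_exs:
  "holds M s (exs [a..<a+r] p) \<longleftrightarrow>
   (\<exists>ws. length ws = r \<and> set ws \<subseteq> carr M \<and>
      holds M (\<lambda>v. if a \<le> v \<and> v < a + r then ws ! (v - a) else s v) p)"
proof (induction r arbitrary: a s)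
  case 0
  have "(\<lambda>v. if a \<le> v \<and> v < a then [] ! (v - a) else s v) = s" by (auto simp: fun_eq_iff)
  then show ?case by simp
next
  case (Suc r)
  have eq: "[a..<a + Suc r] = a # [Suc a..<Suc a + r]"
    by (simp add: upt_rec)
  have fe: "\<And>x ws. (\<lambda>v. if Suc a \<le> v \<and> v < Suc a + r then ws ! (v - Suc a) else (s(a := x)) v)
      = (\<lambda>v. if a \<le> v \<and> v < a + Suc r then (x # ws) ! (v - a) else s v)"
  proof
    fix x ws v
    show "(if Suc a \<le> v \<and> v < Suc a + r then ws ! (v - Suc a) else (s(a := x)) v)
      = (if a \<le> v \<and> v < a + Suc r then (x # ws) ! (v - a) else s v)"
      by (cases "v = a"; cases "v < a") (auto simp: nth_Cons')
  qed
  show ?case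
  proof
    assume "holds M s (exs [a..<a + Suc r] p)"
    then obtain x ws where "x \<in> carr M" "length ws = r" "set ws \<subseteq> carr M"
      "holds M (\<lambda>v. if Suc a \<le> v \<and> v < Suc a + r then ws ! (v - Suc a) else (s(a := x)) v) p"
      using Suc.IH by (simp only: eq exs.simps holds.simps) blast
    then show "\<exists>ws. length ws = Suc r \<and> set ws \<subseteq> carr M \<and>
      holds M (\<lambda>v. if a \<le> v \<and> v < a + Suc r then ws ! (v - a) else s v) p"
      using fe[where x=x and ws=ws] by (intro exI[of _ "x # ws"]) simp
  next
    assume "\<exists>ws. length ws = Suc r \<and> set ws \<subseteq> carr M \<and>
      holds M (\<lambda>v. if a \<le> v \<and> v < a + Suc r then ws ! (v - a) else s v) p"
    then obtain ws where ws: "length ws = Suc r" "set ws \<subseteq> carr M"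
      "holds M (\<lambda>v. if a \<le> v \<and> v < a + Suc r then ws ! (v - a) else s v) p" by blast
    then obtain x ws' where "ws = x # ws'" by (cases ws) auto
    have x: "x \<in> carr M" "set ws' \<subseteq> carr M" "length ws' = r" using ws \<open>ws = x # ws'\<close> by auto
    have "holds M (s(a := x)) (exs [Suc a..<Suc a + r] p)"
      unfolding Suc.IH using x ws(3)[unfolded \<open>ws = x # ws'\<close>] fe[where x=x and ws="ws'"] by (intro exI[of _ ws']) simp
    then show "holds M s (exs [a..<a + Suc r] p)"
      using x by (simp only: eq exs.simps holds.simps) blast
  qed
qed



fun alt :: "real set \<Rightarrow> bool \<Rightarrow> real list \<Rightarrow> bool" where
  "alt A v [] = True"
| "alt A v (x # xs) = ((x \<in> A) = v \<and> alt A (\<not> v) xs)"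

lemma alt_nth: "alt A v xs \<Longrightarrow> j < length xs \<Longrightarrow> (xs ! j \<in> A) = (if even j then v else \<not> v)"
proof (induction xs arbitrary: v j)
  case (Cons x xs)
  then show ?case by (cases j) auto
qed simp

lemma alt_meas:
  "D \<subseteq> {0..1} \<Longrightarrow> D \<in> sets lebesgue \<Longrightarrow>
   \<not> (\<exists>xs. length xs = L \<and> sorted_wrt (<) xs \<and> set xs \<subseteq> D \<and> alt A v xs) \<Longrightarrow>
   A \<inter> D \<in> sets lebesgue"
proof (induction L arbitrary: D v)
  case 0
  then show ?case by auto
next
  case (Suc L)
  define B where "B = {x\<in>D. (x \<in> A) = v}"
  show ?case
  proof (cases "B = {}")
    case True
    then have "A \<inter> D = (if v then {} else D)" unfolding B_def by auto
    then show ?thesis using Suc.prems by auto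
  next
    case False
    have bdd: "bdd_below B" using Suc.prems(1) unfolding B_def bdd_below_def by (intro exI[of _ 0]) auto
    define s where "s = Inf B"
    define D' where "D' = D \<inter> {s<..}"
    have "\<not> (\<exists>ys. length ys = L \<and> sorted_wrt (<) ys \<and> set ys \<subseteq> D' \<and> alt A (\<not> v) ys)"
    proof
      assume "\<exists>ys. length ys = L \<and> sorted_wrt (<) ys \<and> set ys \<subseteq> D' \<and> alt A (\<not> v) ys"
      then obtain ys where ys: "length ys = L" "sorted_wrt (<) ys" "set ys \<subseteq> D'" "alt A (\<not> v) ys" by blast
      show False
      proof (cases ys)
        case Nil
        from False obtain b where "b \<in> B" by auto
        then have "length [b] = Suc L \<and> sorted_wrt (<) [b] \<and> set [b] \<subseteq> D \<and> alt A v [b]"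
          using ys Nil unfolding B_def by auto
        then show False using Suc.prems(3) by blast
      next
        case (Cons y ys')
        have "s < y" using ys(3) Cons unfolding D'_def by auto
        then obtain b where b: "b \<in> B" "b < y" using cInf_less_iff[OF False bdd] unfolding s_def by auto
        have "sorted_wrt (<) (b # ys)" using ys(2) b Cons by auto
        moreover have "set (b # ys) \<subseteq> D" using ys(3) b(1) unfolding D'_def B_def by auto
        moreover have "alt A v (b # ys)" using ys(4) b(1) unfolding B_def by auto
        ultimately show False using Suc.prems(3) ys(1) by (metis length_Cons)
      qed
    qed
    moreover have "D' \<subseteq> {0..1}" "D' \<in> sets lebesgue" using Suc.prems unfolding D'_def by auto
    ultimately have m1: "A \<inter> D' \<in> sets lebesgue" using Suc.IH by blast
    have "\<And>x. x \<in> D \<Longrightarrow> x < s \<Longrightarrow> x \<notin> B"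
      using cInf_lower[OF _ bdd] unfolding s_def by force
    then have "A \<inter> (D \<inter> {..<s}) = (if v then {} else D \<inter> {..<s})" unfolding B_def by auto
    then have m2: "A \<inter> (D \<inter> {..<s}) \<in> sets lebesgue" using Suc.prems by auto
    have m3: "A \<inter> (D \<inter> {s}) \<in> sets lebesgue"
      by (rule sets.countable) auto
    have "A \<inter> D = (A \<inter> D') \<union> (A \<inter> (D \<inter> {..<s})) \<union> (A \<inter> (D \<inter> {s}))"
      unfolding D'_def by auto
    then show ?thesis using m1 m2 m3 by auto
  qed
qed

lemma meas_interval:
  assumes "A \<in> sets lebesgue" "A \<subseteq> {0..1}" "measure lebesgue A = 0" "{u..w} \<subseteq> A"
  shows "w \<le> (u::real)"
proof (rule ccontr)
  assume "\<not> w \<le> u"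
  have "A \<in> fmeasurable lebesgue"
    using assms(1,2) by (intro bounded_set_imp_lmeasurable) (auto intro: bounded_subset[of "{0..1}"])
  then have "measure lebesgue {u..w} \<le> measure lebesgue A"
    using assms(4) by (intro measure_mono_fmeasurable) auto
  moreover have "measure lebesgue {u..w} = w - u"
    using \<open>\<not> w \<le> u\<close> by simp
  ultimately show False using assms(3) \<open>\<not> w \<le> u\<close> by simp
qed



lemma concat_nth_blocks:
  assumes "\<forall>x\<in>set l. length (I x) = n" "t < length l" "v < n"
  shows "concat (map I l) ! (t * n + v) = I (l ! t) ! v"
  using assms
proof (induction l arbitrary: t)
  case (Cons x l)
  show ?case
  proof (cases t)
    case 0 then show ?thesis using Cons by (simp add: nth_append)
  next
    case (Suc t')
    then show ?thesis using Cons by (simp add: nth_append add.assoc)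
  qed
qed simp

lemma length_concat_blocks:
  "\<forall>x\<in>set l. length (I x) = n \<Longrightarrow> length (concat (map I l)) = length l * n"
  by (induction l) auto

definition sig :: "nat \<Rightarrow> nat \<Rightarrow> nat \<Rightarrow> nat \<Rightarrow> nat \<Rightarrow> nat" where
  "sig n m' K t v = (if v < n then t * n + v else if v < n + m' then K * n + (v - n) else v + (K * n + m'))"

lemma tn_less: "t < K \<Longrightarrow> v < n \<Longrightarrow> t * n + v < K * (n::nat)"
proof -
  assume "t < K" "v < n"
  then have "Suc t * n \<le> K * n" by (intro mult_le_mono1) simp
  then show ?thesis using \<open>v < n\<close> by simp
qed

lemma inj_sig: "t < K \<Longrightarrow> inj (sig n m' K t)"
proof (rule injI)
  fix x y assume tK: "t < K" and e: "sig n m' K t x = sig n m' K t y"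
  have a: "\<And>v. v < n \<Longrightarrow> t * n + v < K * n" using tK tn_less by blast
  show "x = y"
    using e a[of x] a[of y] unfolding sig_def by (auto split: if_splits)
qed

definition lit :: "('f,'r) fm \<Rightarrow> nat \<Rightarrow> nat \<Rightarrow> nat \<Rightarrow> nat set \<Rightarrow> nat \<Rightarrow> ('f,'r) fm" where
  "lit phi n m' K S t = (if t \<in> S then renf (sig n m' K t) phi else FNeg (renf (sig n m' K t) phi))"

definition Psi :: "('f,'r) fm \<Rightarrow> nat \<Rightarrow> nat \<Rightarrow> nat \<Rightarrow> nat set \<Rightarrow> ('f,'r) fm" where
  "Psi phi n m' K S = exs [K*n..<K*n+m'] (conjs (map (lit phi n m' K S) [0..<K]))"

lemma fv_Psi:
  assumes "fv phi \<subseteq> {..<n+m'}"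
  shows "fv (Psi phi n m' K S) \<subseteq> {..<K*n}"
proof -
  have "\<And>t. t < K \<Longrightarrow> fv (lit phi n m' K S t) \<subseteq> {..<K*n+m'}"
  proof -
    fix t assume "t < K"
    have "fv (lit phi n m' K S t) \<subseteq> sig n m' K t ` fv phi"
      unfolding lit_def using fv_ren by auto
    also have "\<dots> \<subseteq> {..<K*n+m'}"
    proof
      fix x assume "x \<in> sig n m' K t ` fv phi"
      then obtain v where "v \<in> fv phi" "x = sig n m' K t v" by auto
      then show "x \<in> {..<K*n+m'}"
        using assms tn_less[OF \<open>t<K\<close>, of v n] unfolding sig_def by (auto split: if_splits)
    qed
    finally show "fv (lit phi n m' K S t) \<subseteq> {..<K*n+m'}" .
  qed
  then show ?thesis unfolding Psi_def fv_exs fv_conjs by fastforce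
qed

lemma Psi_sat:
  assumes fvphi: "fv phi \<subseteq> {..<n+m'}" and lens: "\<forall>x\<in>set l. length (I x) = n" and K: "length l = K"
  shows "sat M (Psi phi n m' K S) (concat (map I l)) \<longleftrightarrow>
    (\<exists>ws. tuple_in M m' ws \<and> (\<forall>t<K. sat M phi (I (l ! t) @ ws) = (t \<in> S)))"
proof -
  define L where "L = concat (map I l)"
  have lenL: "length L = K * n" unfolding L_def using length_concat_blocks[OF lens] K by simp
  have key: "holds M (\<lambda>v. if K*n \<le> v \<and> v < K*n + m' then ws ! (v - K*n) else asg M L v)
       (renf (sig n m' K t) phi) = sat M phi (I (l ! t) @ ws)"
    if t: "t < K" and ws: "length ws = m'" for t ws
  proof -
    let ?s = "\<lambda>v. if K*n \<le> v \<and> v < K*n + m' then ws ! (v - K*n) else asg M L v"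
    have li: "length (I (l ! t)) = n" using lens t K by auto
    have "holds M ?s (renf (sig n m' K t) phi) = holds M (?s \<circ> sig n m' K t) phi"
      by (rule holds_ren[OF inj_sig[OF t]])
    also have "\<dots> = holds M (asg M (I (l ! t) @ ws)) phi"
    proof (rule holds_coinc, intro ballI)
      fix v assume "v \<in> fv phi"
      then have v: "v < n + m'" using fvphi by auto
      show "(?s \<circ> sig n m' K t) v = asg M (I (l ! t) @ ws) v"
      proof (cases "v < n")
        case True
        have "t * n + v < K * n" using tn_less[OF t True] .
        then show ?thesis using True li ws lenL concat_nth_blocks[OF lens, of t v] t K
          by (simp add: sig_def asg_def nth_append L_def)
      next
        case False
        then have "K * n \<le> K * n + (v - n)" "K * n + (v - n) < K * n + m'" using v by auto
        then show ?thesis using v li ws False by (simp add: sig_def asg_def nth_append)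
      qed
    qed
    finally show ?thesis unfolding sat_def .
  qed
  have "sat M (Psi phi n m' K S) L \<longleftrightarrow>
     (\<exists>ws. length ws = m' \<and> set ws \<subseteq> carr M \<and>
       (\<forall>t<K. holds M (\<lambda>v. if K*n \<le> v \<and> v < K*n + m' then ws ! (v - K*n) else asg M L v)
          (lit phi n m' K S t)))"
    unfolding sat_def Psi_def holds_exs holds_conjs by auto
  also have "\<dots> \<longleftrightarrow> (\<exists>ws. tuple_in M m' ws \<and> (\<forall>t<K. sat M phi (I (l ! t) @ ws) = (t \<in> S)))"
  proof -
    have "\<And>ws. length ws = m' \<Longrightarrow> (\<forall>t<K. holds M (\<lambda>v. if K*n \<le> v \<and> v < K*n + m' then ws ! (v - K*n) else asg M L v)
          (lit phi n m' K S t)) = (\<forall>t<K. sat M phi (I (l ! t) @ ws) = (t \<in> S))"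
      unfolding lit_def using key by auto
    then show ?thesis unfolding tuple_in_def by blast
  qed
  finally show ?thesis unfolding L_def .
qed



definition swp :: "nat \<Rightarrow> nat \<Rightarrow> nat \<Rightarrow> nat" where
  "swp n m' v = (if v < n then v + m' else if v < n + m' then v - n else v)"

lemma inj_swp: "inj (swp n m')"
  by (rule injI) (auto simp: swp_def split: if_splits)

lemma fv_swp: "fv phi \<subseteq> {..<n+m'} \<Longrightarrow> fv (renf (swp n m') phi) \<subseteq> {..<m'+n}"
  using fv_ren[of "swp n m'" phi] by (force simp: swp_def)

lemma sat_swp:
  assumes "fv phi \<subseteq> {..<n+m'}" "length a = n" "length ws = m'"
  shows "sat M (renf (swp n m') phi) (ws @ a) = sat M phi (a @ ws)"
  unfolding sat_def holds_ren[OF inj_swp]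
  by (rule holds_coinc) (use assms in \<open>auto simp: swp_def asg_def nth_append\<close>)

definition pos :: "nat \<Rightarrow> nat \<Rightarrow> real" where
  "pos \<alpha> i = 1 / (1 + real (prod_encode (\<alpha>, i)))"

lemma pos_in: "pos \<alpha> i \<in> {0..1}"
  by (auto simp: pos_def)

lemma pos_inj: "pos \<alpha> i = pos \<beta> j \<Longrightarrow> \<alpha> = \<beta> \<and> i = j"
proof -
  assume "pos \<alpha> i = pos \<beta> j"
  then have "real (prod_encode (\<alpha>, i)) = real (prod_encode (\<beta>, j))"
    by (simp add: pos_def divide_simps)
  then have "prod_encode (\<alpha>, i) = prod_encode (\<beta>, j)" by simp
  then show ?thesis using inj_prod_encode[of UNIV] by (auto dest: injD)
qed

lemma shatter_notSD:
  fixes M :: "('a,'f,'r) struct" and I :: "real \<Rightarrow> 'a list" and phi :: "('f,'r) fm"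
  assumes fvphi: "fv phi \<subseteq> {..<n+m'}"
    and tup: "\<forall>i\<in>{0..1}. tuple_in M n (I i)"
    and sh: "\<forall>K S l. length l = K \<and> sorted_wrt (<) l \<and> set l \<subseteq> {0..1} \<longrightarrow>
       (\<exists>ws. tuple_in M m' ws \<and> (\<forall>t<K. sat M phi (I (l ! t) @ ws) = (t \<in> S)))"
  shows "\<not> strongly_dependent M"
proof -
  define psi where "psi = renf (swp n m') phi"
  define b where "b = (\<lambda>(\<alpha>::nat) (i::nat). I (pos \<alpha> i))"
  have fvpsi: "\<forall>\<alpha>::nat. fv psi \<subseteq> {..<m' + n}" using fv_swp[OF fvphi] psi_def by auto
  have tb: "\<forall>\<alpha> i. tuple_in M n (b \<alpha> i)" using tup pos_in unfolding b_def by auto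
  have fs: "fin_sat M m'
        ({((\<lambda>\<alpha>::nat. psi) \<alpha>, b \<alpha> (\<eta> \<alpha>)) | \<alpha>. True} \<union>
         {(FNeg ((\<lambda>\<alpha>::nat. psi) \<alpha>), b \<alpha> i) | \<alpha> i. i \<noteq> \<eta> \<alpha>})" for \<eta> :: "nat \<Rightarrow> nat"
    unfolding fin_sat_def
  proof (intro allI impI)
    fix F assume F: "finite F \<and> F \<subseteq> {((\<lambda>\<alpha>::nat. psi) \<alpha>, b \<alpha> (\<eta> \<alpha>)) | \<alpha>. True} \<union>
         {(FNeg ((\<lambda>\<alpha>::nat. psi) \<alpha>), b \<alpha> i) | \<alpha> i. i \<noteq> \<eta> \<alpha>}"
    define match where "match = (\<lambda>e (pr :: nat \<times> nat).
       (e = (psi, b (fst pr) (snd pr)) \<and> snd pr = \<eta> (fst pr)) \<or>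
       (e = (FNeg psi, b (fst pr) (snd pr)) \<and> snd pr \<noteq> \<eta> (fst pr)))"
    define pr where "pr = (\<lambda>e. SOME p. match e p)"
    have mpr: "match e (pr e)" if "e \<in> F" for e
    proof -
      have "\<exists>p. match e p" using F that unfolding match_def by force
      then show ?thesis unfolding pr_def by (rule someI_ex)
    qed
    define P where "P = (\<lambda>p. pos (fst p) (snd p)) ` pr ` F"
    have finP: "finite P" using F unfolding P_def by auto
    define l where "l = sorted_list_of_set P"
    define K where "K = length l"
    define S where "S = {t. t < K \<and> (\<exists>\<alpha>. l ! t = pos \<alpha> (\<eta> \<alpha>))}"
    have setl: "set l = P" unfolding l_def using finP by simp
    have "set l \<subseteq> {0..1}" unfolding setl P_def using pos_in by auto
    then obtain ws where ws: "tuple_in M m' ws" "\<forall>t<K. sat M phi (I (l ! t) @ ws) = (t \<in> S)"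
      using sh[rule_format, of l K S] unfolding K_def by (auto simp: l_def)
    have "\<forall>(ps, c)\<in>F. sat M ps (ws @ c)"
    proof (intro ballI, clarify)
      fix ps c assume e: "(ps, c) \<in> F"
      obtain \<alpha> i where pe: "pr (ps, c) = (\<alpha>, i)" by fastforce
      have m: "match (ps, c) (\<alpha>, i)" using mpr[OF e] pe by simp
      have "pos \<alpha> i \<in> set l" unfolding setl P_def using e pe by force
      then obtain t where t: "t < K" "l ! t = pos \<alpha> i" unfolding K_def by (metis in_set_conv_nth)
      have lc: "length c = n" and lw: "length ws = m'"
        using m tb ws(1) unfolding match_def tuple_in_def by auto
      have c: "c = I (l ! t)" using m t unfolding match_def b_def by auto
      have tS: "t \<in> S \<longleftrightarrow> i = \<eta> \<alpha>"
      proof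
        assume "t \<in> S"
        then obtain \<beta> where "l ! t = pos \<beta> (\<eta> \<beta>)" unfolding S_def by blast
        then show "i = \<eta> \<alpha>" using t(2) pos_inj by metis
      next
        assume "i = \<eta> \<alpha>"
        then show "t \<in> S" using t unfolding S_def by blast
      qed
      have sw: "sat M psi (ws @ c) = sat M phi (c @ ws)"
        unfolding psi_def by (rule sat_swp[OF fvphi lc lw])
      have st: "sat M phi (c @ ws) = (t \<in> S)" using ws(2) t(1) c by simp
      show "sat M ps (ws @ c)"
      proof (cases "i = \<eta> \<alpha>")
        case True
        then have "ps = psi" using m unfolding match_def by auto
        then show ?thesis using sw st tS True by simp
      next
        case False
        then have "ps = FNeg psi" using m unfolding match_def by auto
        then show ?thesis using sw st tS False by (simp add: sat_def)
      qed
    qed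
    then show "\<exists>a. tuple_in M m' a \<and> (\<forall>(ps, c)\<in>F. sat M ps (a @ c))"
      using ws(1) by blast
  qed
  show ?thesis
    unfolding strongly_dependent_def not_not
    apply (rule exI[of _ m'], rule exI[of _ "\<lambda>\<alpha>::nat. psi"], rule exI[of _ "\<lambda>\<alpha>::nat. n"], rule exI[of _ b])
    using fvpsi tb fs by simp
qed



lemma chain_lt:
  fixes p q :: "nat \<Rightarrow> real"
  assumes "\<forall>t<K. p t < q t \<and> (Suc t < K \<longrightarrow> q t < p (Suc t))"
  shows "i < j \<Longrightarrow> j < K \<Longrightarrow> q i < p j"
proof (induction j)
  case 0 then show ?case by simp
next
  case (Suc j)
  show ?case
  proof (cases "i = j")
    case True then show ?thesis using assms Suc.prems by auto
  next
    case False
    then have "q i < p j" using Suc by auto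
    also have "p j < q j" using assms Suc.prems by auto
    also have "q j < p (Suc j)" using assms Suc.prems by auto
    finally show ?thesis .
  qed
qed

lemma sorted_pick:
  fixes p q :: "nat \<Rightarrow> real"
  assumes "\<forall>t<K. p t < q t \<and> (Suc t < K \<longrightarrow> q t < p (Suc t))"
  shows "sorted_wrt (<) (map (\<lambda>t. if t \<in> S then p t else q t) [0..<K])"
  unfolding sorted_wrt_iff_nth_less
proof (intro allI impI)
  fix i j assume ij: "i < j" "j < length (map (\<lambda>t. if t \<in> S then p t else q t) [0..<K])"
  then have "j < K" by simp
  have iK: "i < K" using ij \<open>j < K\<close> by simp
  have "(if i \<in> S then p i else q i) \<le> q i" using assms iK by (auto intro: less_imp_le)
  also have "q i < p j" using chain_lt[OF assms ij(1) \<open>j<K\<close>] .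
  also have "p j \<le> (if j \<in> S then p j else q j)" using assms \<open>j < K\<close> by auto
  finally show "map (\<lambda>t. if t \<in> S then p t else q t) [0..<K] ! i
       < map (\<lambda>t. if t \<in> S then p t else q t) [0..<K] ! j"
    using ij \<open>j<K\<close> iK by (simp only: length_map length_upt nth_map nth_upt diff_zero add_0)
qed

theorem lemma3p4:
  fixes M :: "('a, 'f, 'r) struct"
    and n m :: nat
    and I :: "real \<Rightarrow> 'a list"
    and phi :: "('f, 'r) fm"
    and c :: "'a list"
  assumes "monster M"
    and "strongly_dependent M"
    and "indisc_segment M n I"
    and "fv phi \<subseteq> {..<n + m + length c}"
    and "set c \<subseteq> carr M"
    and "\<forall>b. tuple_in M m b \<longrightarrow> avg_measure M I phi (b @ c) = 0"
  shows "\<exists>k::nat. \<forall>S. S \<subseteq> {0..1} \<and> finite S \<and> card S = k \<longrightarrow>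
           \<not> (\<exists>b. tuple_in M m b \<and> (\<forall>i\<in>S. sat M phi (I i @ b @ c)))"
proof -
  define m' where "m' = m + length c"
  have fvphi: "fv phi \<subseteq> {..<n + m'}" using assms(4) unfolding m'_def by (simp add: add.assoc)
  have tup: "\<forall>i\<in>{0..1}. tuple_in M n (I i)" using assms(3) unfolding indisc_segment_def by blast
  have lens: "\<And>l. set l \<subseteq> {0..1} \<Longrightarrow> \<forall>x\<in>set l. length (I x) = n"
    using tup unfolding tuple_in_def by auto
  have "\<not> (\<forall>K S l. length l = K \<and> sorted_wrt (<) l \<and> set l \<subseteq> {0..1} \<longrightarrow>
       (\<exists>ws. tuple_in M m' ws \<and> (\<forall>t<K. sat M phi (I (l ! t) @ ws) = (t \<in> S))))"
    using shatter_notSD[OF fvphi tup] assms(2) by blast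
  then obtain K S l0 where l0: "length l0 = K" "sorted_wrt (<) l0" "set l0 \<subseteq> {0..1}"
    and nw0: "\<not> (\<exists>ws. tuple_in M m' ws \<and> (\<forall>t<K. sat M phi (I (l0 ! t) @ ws) = (t \<in> S)))"
    by blast
  have noK: "\<not> (\<exists>ws. tuple_in M m' ws \<and> (\<forall>t<K. sat M phi (I (l ! t) @ ws) = (t \<in> S)))"
    if l: "length l = K" "sorted_wrt (<) l" "set l \<subseteq> {0..1}" for l
  proof -
    have "fv (Psi phi n m' K S) \<subseteq> {..<length l0 * n}" using fv_Psi[OF fvphi] l0(1) by auto
    then have "sat M (Psi phi n m' K S) (concat (map I l0)) \<longleftrightarrow> sat M (Psi phi n m' K S) (concat (map I l))"
    proof -
      have "\<forall>(psi :: ('f, 'r) fm) is js. fv psi \<subseteq> {..<length is * n} \<and>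
        length is = length js \<and> sorted_wrt (<) is \<and> sorted_wrt (<) js \<and>
        set is \<subseteq> {0..1} \<and> set js \<subseteq> {0..1} \<longrightarrow>
        (sat M psi (concat (map I is)) \<longleftrightarrow> sat M psi (concat (map I js)))"
        using assms(3) unfolding indisc_segment_def by (rule conjunct2)
      then show ?thesis using \<open>fv (Psi phi n m' K S) \<subseteq> {..<length l0 * n}\<close> l l0
        by (elim allE[of _ "Psi phi n m' K S"] allE[of _ l0] allE[of _ l]) auto
    qed
    then show ?thesis using nw0 Psi_sat[OF fvphi lens[OF l(3)] l(1)] Psi_sat[OF fvphi lens[OF l0(3)] l0(1)]
      by blast
  qed
  show ?thesis
  proof (intro exI[of _ "Suc K"] allI impI notI)
    fix S' assume S': "S' \<subseteq> {0..1} \<and> finite S' \<and> card S' = Suc K"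
      and "\<exists>b. tuple_in M m b \<and> (\<forall>i\<in>S'. sat M phi (I i @ b @ c))"
    then obtain b where b: "tuple_in M m b" "\<forall>i\<in>S'. sat M phi (I i @ b @ c)" by blast
    define ws where "ws = b @ c"
    have tws: "tuple_in M m' ws" using b(1) assms(5) unfolding ws_def m'_def tuple_in_def by auto
    define A where "A = {i\<in>{0..1}. sat M phi (I i @ ws)}"
    have mA: "measure lebesgue A = 0" using assms(6) b(1) unfolding A_def avg_measure_def ws_def by auto
    have noalt: "\<not> (\<exists>xs. length xs = 2 * K \<and> sorted_wrt (<) xs \<and> set xs \<subseteq> {0..1} \<and> alt A True xs)"
    proof
      assume "\<exists>xs. length xs = 2 * K \<and> sorted_wrt (<) xs \<and> set xs \<subseteq> {0..1} \<and> alt A True xs"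
      then obtain xs where xs: "length xs = 2 * K" "sorted_wrt (<) xs" "set xs \<subseteq> {0..1}" "alt A True xs"
        by blast
      define l where "l = map (\<lambda>t. if t \<in> S then xs ! (2*t) else xs ! (2*t+1)) [0..<K]"
      have ch: "\<forall>t<K. xs ! (2*t) < xs ! (2*t+1) \<and> (Suc t < K \<longrightarrow> xs ! (2*t+1) < xs ! (2 * Suc t))"
        using xs(1,2) by (auto simp: sorted_wrt_iff_nth_less)
      have "sorted_wrt (<) l" unfolding l_def using sorted_pick[OF ch] by simp
      moreover have "set l \<subseteq> {0..1}" unfolding l_def using xs(1,3) by (auto dest!: nth_mem)
      moreover have "length l = K" unfolding l_def by simp
      moreover have "\<forall>t<K. sat M phi (I (l ! t) @ ws) = (t \<in> S)"
      proof (intro allI impI)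
        fix t assume t: "t < K"
        have e: "xs ! (2*t) \<in> A" using alt_nth[OF xs(4), of "2*t"] t xs(1) by simp
        have o: "xs ! (2*t+1) \<notin> A" using alt_nth[OF xs(4), of "2*t+1"] t xs(1) by simp
        have "xs ! (2*t+1) \<in> set xs" using t xs(1) by (intro nth_mem) simp
        then have "xs ! (2*t+1) \<in> {0..1}" using xs(3) by blast
        then show "sat M phi (I (l ! t) @ ws) = (t \<in> S)"
          using e o t unfolding l_def A_def by auto
      qed
      ultimately show False using noK tws by blast
    qed
    have Asub: "A \<subseteq> {0..1}" unfolding A_def by auto
    have Ameas: "A \<in> sets lebesgue"
      using alt_meas[OF order_refl _ noalt] Asub by (simp add: Int_absorb2)
    define p where "p = sorted_list_of_set S'"
    have p: "length p = Suc K" "sorted_wrt (<) p" "set p = S'"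
      using S' unfolding p_def by auto
    have pA: "\<And>j. j < Suc K \<Longrightarrow> p ! j \<in> A"
    proof -
      fix j assume j: "j < Suc K"
      then have "p ! j \<in> set p" using p(1) by (intro nth_mem) simp
      then have "p ! j \<in> S'" using p(3) by simp
      then show "p ! j \<in> A" using S' b(2) unfolding A_def ws_def by auto
    qed
    have gap: "\<exists>q. p ! j < q \<and> q < p ! Suc j \<and> q \<notin> A" if j: "j < K" for j
    proof (rule ccontr)
      assume "\<not> (\<exists>q. p ! j < q \<and> q < p ! Suc j \<and> q \<notin> A)"
      then have "{p ! j .. p ! Suc j} \<subseteq> A"
      proof (intro subsetI)
        fix x assume nq: "\<not> (\<exists>q. p ! j < q \<and> q < p ! Suc j \<and> q \<notin> A)" and x: "x \<in> {p ! j .. p ! Suc j}"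
        have "p ! j \<in> A" "p ! Suc j \<in> A" using pA j by auto
        then show "x \<in> A" using nq x by (cases "x = p ! j"; cases "x = p ! Suc j") auto
      qed
      then have "p ! Suc j \<le> p ! j" using meas_interval[OF Ameas Asub mA] by blast
      moreover have "p ! j < p ! Suc j" using p j by (auto simp: sorted_wrt_iff_nth_less)
      ultimately show False by simp
    qed
    define q where "q = (\<lambda>j. SOME q. p ! j < q \<and> q < p ! Suc j \<and> q \<notin> A)"
    have q: "p ! j < q j \<and> q j < p ! Suc j \<and> q j \<notin> A" if "j < K" for j
      unfolding q_def using someI_ex[OF gap[OF that]] .
    have pin: "\<And>j. j < Suc K \<Longrightarrow> p ! j \<in> {0..1}" using pA Asub by blast
    define l where "l = map (\<lambda>t. if t \<in> S then p ! t else q t) [0..<K]"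
    have ch: "\<forall>t<K. p ! t < q t \<and> (Suc t < K \<longrightarrow> q t < p ! (Suc t))"
      using q by auto
    have "sorted_wrt (<) l" unfolding l_def using sorted_pick[OF ch] by simp
    moreover have qin: "\<And>t. t < K \<Longrightarrow> q t \<in> {0..1}"
    proof -
      fix t assume t: "t < K"
      have "p ! t \<in> {0..1}" "p ! Suc t \<in> {0..1}" using pin t by auto
      then show "q t \<in> {0..1}" using q[OF t] by auto
    qed
    moreover have "set l \<subseteq> {0..1}" unfolding l_def using pin qin by auto
    moreover have "length l = K" unfolding l_def by simp
    moreover have "\<forall>t<K. sat M phi (I (l ! t) @ ws) = (t \<in> S)"
    proof (intro allI impI)
      fix t assume t: "t < K"
      show "sat M phi (I (l ! t) @ ws) = (t \<in> S)"
        using pA[of t] q[OF t] qin[OF t] t unfolding l_def A_def by auto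
    qed
    ultimately show False using noK tws by blast
  qed
qed

end
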